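(* Suppose $X$ is a Fr\'echet $L$-selective space in which every countable subspace is first countable. Then $X$ is strongly $L$-selective.
   Context: All spaces are assumed $T_1$. For spaces $Y$, $X$, a map $\varphi:Y\to\mathcal P(X)\setminus\{\emptyset\}$ is lower semicontinuous (l.s.c.) if $\{y:\varphi(y)\cap U\neq\emptyset\}$ is open in $Y$ for every open $U\subseteq X$; a selection is a map $f:Y\to X$ with $f(y)\in\varphi(y)$ for all $y$. $X$ is strongly $Y$-selective if every l.s.c. map $Y\to\mathcal P(X)\setminus\{\emptyset\}$ has a continuous selection, and $Y$-selective if every l.s.c. map from $Y$ to the nonempty closed subsets of $X$ has a continuous selection. (Strongly) $L$-selective means (strongly) $(\omega+1)$-selective, with $\omega+1$ carrying the order topology. Fr\'echet means: whenever $x\in\overline A$ there is a sequence in $A$ converging to $x$. *)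

theory Defs
  imports "HOL-Analysis.Analysis" "HOL-Library.Extended_Nat"
begin

definition lsc_map :: "'b topology \<Rightarrow> 'a topology \<Rightarrow> ('b \<Rightarrow> 'a set) \<Rightarrow> bool" where
  "lsc_map Y X \<phi> \<longleftrightarrow>
     (\<forall>y \<in> topspace Y. \<phi> y \<subseteq> topspace X \<and> \<phi> y \<noteq> {}) \<and>
     (\<forall>U. openin X U \<longrightarrow> openin Y {y \<in> topspace Y. \<phi> y \<inter> U \<noteq> {}})"

definition is_selection :: "'b topology \<Rightarrow> ('b \<Rightarrow> 'a set) \<Rightarrow> ('b \<Rightarrow> 'a) \<Rightarrow> bool" where
  "is_selection Y \<phi> f \<longleftrightarrow> (\<forall>y \<in> topspace Y. f y \<in> \<phi> y)"

definition strongly_selective :: "'b topology \<Rightarrow> 'a topology \<Rightarrow> bool" where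
  "strongly_selective Y X \<longleftrightarrow>
     (\<forall>\<phi>. lsc_map Y X \<phi> \<longrightarrow> (\<exists>f. continuous_map Y X f \<and> is_selection Y \<phi> f))"

definition selective :: "'b topology \<Rightarrow> 'a topology \<Rightarrow> bool" where
  "selective Y X \<longleftrightarrow>
     (\<forall>\<phi>. lsc_map Y X \<phi> \<and> (\<forall>y \<in> topspace Y. closedin X (\<phi> y))
          \<longrightarrow> (\<exists>f. continuous_map Y X f \<and> is_selection Y \<phi> f))"

text \<open>omega+1 with the order topology: the type enat with its (order) topology.\<close>
definition omega_plus_one :: "enat topology" where
  "omega_plus_one = euclidean"

definition L_selective :: "'a topology \<Rightarrow> bool" where
  "L_selective X \<longleftrightarrow> selective omega_plus_one X"

definition strongly_L_selective :: "'a topology \<Rightarrow> bool" where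
  "strongly_L_selective X \<longleftrightarrow> strongly_selective omega_plus_one X"

definition frechet_space :: "'a topology \<Rightarrow> bool" where
  "frechet_space X \<longleftrightarrow>
     (\<forall>A x. A \<subseteq> topspace X \<and> x \<in> X closure_of A \<longrightarrow>
        (\<exists>\<sigma>::nat \<Rightarrow> 'a. range \<sigma> \<subseteq> A \<and> limitin X \<sigma> x sequentially))"

end

theory Submission
  imports Defs
begin

lemma open_enat_tail:
  "open (A::enat set) \<longleftrightarrow> (\<infinity> \<in> A \<longrightarrow> (\<exists>N. \<forall>n\<ge>N. enat n \<in> A))"
proof -
  have "(\<exists>n::nat. {enat n <..} \<subseteq> A) \<longleftrightarrow> (\<infinity> \<in> A \<longrightarrow> (\<exists>N. \<forall>n\<ge>N. enat n \<in> A))"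
    if inf: "\<infinity> \<in> A"
  proof
    assume "\<exists>n::nat. {enat n <..} \<subseteq> A"
    then obtain n where n: "{enat n <..} \<subseteq> A" by blast
    have "\<forall>m\<ge>Suc n. enat m \<in> A" using n by auto
    then show "\<infinity> \<in> A \<longrightarrow> (\<exists>N. \<forall>n\<ge>N. enat n \<in> A)" by blast
  next
    assume "\<infinity> \<in> A \<longrightarrow> (\<exists>N. \<forall>n\<ge>N. enat n \<in> A)"
    then obtain N where N: "\<forall>n\<ge>N. enat n \<in> A" using inf by blast
    have "{enat N <..} \<subseteq> A"
    proof
      fix x assume "x \<in> {enat N <..}"
      then show "x \<in> A" using N inf by (cases x) auto
    qed
    then show "\<exists>n::nat. {enat n <..} \<subseteq> A" by blast
  qed
  then show ?thesis using open_enat_iff[of A] by blast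
qed

lemma openin_omega: "openin omega_plus_one A \<longleftrightarrow> (\<infinity> \<in> A \<longrightarrow> (\<exists>N. \<forall>n\<ge>N. enat n \<in> A))"
  by (simp add: omega_plus_one_def open_enat_tail)

lemma topspace_omega[simp]: "topspace omega_plus_one = UNIV"
  by (simp add: omega_plus_one_def)

theorem mainTheorem20:
  fixes X :: "'a topology"
  assumes "t1_space X"
    and "frechet_space X"
    and "L_selective X"
    and "\<forall>S. S \<subseteq> topspace X \<and> countable S \<longrightarrow> first_countable (subtopology X S)"
  shows "strongly_L_selective X"
  unfolding strongly_L_selective_def strongly_selective_def
proof (intro allI impI)
  fix \<phi> assume lsc: "lsc_map omega_plus_one X \<phi>"
  have phisub: "\<And>y. \<phi> y \<subseteq> topspace X" and phine: "\<And>y. \<phi> y \<noteq> {}"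
    using lsc unfolding lsc_map_def by auto
  have phiopen: "\<And>U. openin X U \<Longrightarrow> openin omega_plus_one {y. \<phi> y \<inter> U \<noteq> {}}"
    using lsc unfolding lsc_map_def by auto
  obtain p where p: "p \<in> \<phi> \<infinity>" using phine by blast
  have pX: "p \<in> topspace X" using p phisub by blast
  have tailU: "\<exists>N. \<forall>n\<ge>N. \<phi> (enat n) \<inter> U \<noteq> {}" if "openin X U" "p \<in> U" for U
    using phiopen[OF that(1)] p that(2) unfolding openin_omega by blast
  define \<psi> where "\<psi> y = (case y of enat n \<Rightarrow> X closure_of \<phi> (enat n) | \<infinity> \<Rightarrow> {p})" for y
  have "lsc_map omega_plus_one X \<psi> \<and> (\<forall>y \<in> topspace omega_plus_one. closedin X (\<psi> y))"
  proof (intro conjI ballI)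
    show "lsc_map omega_plus_one X \<psi>"
      unfolding lsc_map_def
    proof (intro conjI ballI allI impI)
      fix y :: enat
      show "\<psi> y \<subseteq> topspace X" using pX
        by (cases y) (auto simp: \<psi>_def closure_of_subset_topspace)
      show "\<psi> y \<noteq> {}"
      proof (cases y)
        case (enat n)
        have "\<phi> (enat n) \<subseteq> X closure_of \<phi> (enat n)"
          by (rule closure_of_subset[OF phisub])
        then show ?thesis using phine[of "enat n"] enat by (auto simp: \<psi>_def)
      qed (simp add: \<psi>_def)
    next
      fix U assume U: "openin X U"
      show "openin omega_plus_one {y \<in> topspace omega_plus_one. \<psi> y \<inter> U \<noteq> {}}"
        unfolding openin_omega
      proof
        assume "\<infinity> \<in> {y \<in> topspace omega_plus_one. \<psi> y \<inter> U \<noteq> {}}"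
        then have "p \<in> U" by (simp add: \<psi>_def)
        then obtain N where N: "\<forall>n\<ge>N. \<phi> (enat n) \<inter> U \<noteq> {}" using tailU U by blast
        have "\<forall>n\<ge>N. \<psi> (enat n) \<inter> U \<noteq> {}"
        proof (intro allI impI)
          fix n assume "N \<le> n"
          then have "\<phi> (enat n) \<inter> U \<noteq> {}" using N by blast
          moreover have "\<phi> (enat n) \<subseteq> X closure_of \<phi> (enat n)"
            by (rule closure_of_subset[OF phisub])
          ultimately show "\<psi> (enat n) \<inter> U \<noteq> {}" by (auto simp: \<psi>_def)
        qed
        then show "\<exists>N. \<forall>n\<ge>N. enat n \<in> {y \<in> topspace omega_plus_one. \<psi> y \<inter> U \<noteq> {}}"
          by auto
      qed
    qed
  next
    fix y :: enat
    show "closedin X (\<psi> y)"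
      using assms(1) pX
      by (cases y) (auto simp: \<psi>_def t1_space_closedin_singleton)
  qed
  then obtain g where gc: "continuous_map omega_plus_one X g" and gs: "is_selection omega_plus_one \<psi> g"
    using assms(3) unfolding L_selective_def selective_def by blast
  define y where "y n = g (enat n)" for n
  have gp: "g \<infinity> = p" using gs[unfolded is_selection_def, rule_format, of \<infinity>] by (simp add: \<psi>_def)
  have ycl: "y n \<in> X closure_of \<phi> (enat n)" for n
    using gs[unfolded is_selection_def, rule_format, of "enat n"] by (simp add: \<psi>_def y_def)
  have ylim: "limitin X y p sequentially"
    unfolding limitin_def
  proof (intro conjI allI impI)
    show "p \<in> topspace X" by (rule pX)
    fix U assume U: "openin X U \<and> p \<in> U"
    have "openin omega_plus_one {x \<in> topspace omega_plus_one. g x \<in> U}"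
      using gc U unfolding continuous_map_def by blast
    moreover have "\<infinity> \<in> {x \<in> topspace omega_plus_one. g x \<in> U}" using gp U by simp
    ultimately obtain N where "\<forall>n\<ge>N. g (enat n) \<in> U" unfolding openin_omega by auto
    then show "eventually (\<lambda>n. y n \<in> U) sequentially"
      unfolding y_def eventually_sequentially by blast
  qed
  have "\<forall>n. \<exists>\<sigma>::nat \<Rightarrow> 'a. range \<sigma> \<subseteq> \<phi> (enat n) \<and> limitin X \<sigma> (y n) sequentially"
    using assms(2) ycl phisub unfolding frechet_space_def by blast
  then obtain z where zr: "\<And>n. range (z n) \<subseteq> \<phi> (enat n)"
    and zl: "\<And>n. limitin X (z n) (y n) sequentially"
    by metis
  define S where "S = insert p (range y \<union> (\<Union>n. range (z n)))"
  have ytop: "y n \<in> topspace X" for n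
    using ycl[of n] closure_of_subset_topspace[of X "\<phi> (enat n)"] by blast
  have Ssub: "S \<subseteq> topspace X"
    using pX ytop zr phisub unfolding S_def by blast
  have Scount: "countable S" unfolding S_def by simp
  have fc: "first_countable (subtopology X S)" using assms(4) Ssub Scount by blast
  have pS: "p \<in> topspace (subtopology X S)" using pX by (simp add: S_def)
  have "\<exists>B. countable B \<and> (\<forall>V\<in>B. openin (subtopology X S) V) \<and>
      (\<forall>U. openin (subtopology X S) U \<and> p \<in> U \<longrightarrow> (\<exists>V\<in>B. p \<in> V \<and> V \<subseteq> U))"
    using fc pS unfolding first_countable_def by (rule bspec)
  then obtain B where Bc: "countable B" and Bo: "\<forall>V\<in>B. openin (subtopology X S) V"
    and Bb: "\<forall>U. openin (subtopology X S) U \<and> p \<in> U \<longrightarrow> (\<exists>V\<in>B. p \<in> V \<and> V \<subseteq> U)"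
    by blast
  define B' where "B' = {V\<in>B. p \<in> V}"
  have "openin (subtopology X S) (topspace (subtopology X S))" by (rule openin_topspace)
  then obtain V0 where "V0 \<in> B" "p \<in> V0"
    using Bb \<open>p \<in> topspace (subtopology X S)\<close> by blast
  then have B'ne: "B' \<noteq> {}" unfolding B'_def by blast
  have B'c: "countable B'" using Bc unfolding B'_def by simp
  define W where "W m = from_nat_into B' m" for m
  have WB: "W m \<in> B'" for m unfolding W_def using from_nat_into[OF B'ne] .
  have Wsurj: "\<And>V. V \<in> B' \<Longrightarrow> \<exists>m. W m = V"
    unfolding W_def using from_nat_into_surj[OF B'c] by blast
  have "\<forall>m. \<exists>V. openin X V \<and> W m = S \<inter> V"
  proof
    fix m
    have "openin (subtopology X S) (W m)" using WB[of m] Bo unfolding B'_def by blast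
    then obtain T where "openin X T" "W m = T \<inter> S" unfolding openin_subtopology by blast
    then show "\<exists>V. openin X V \<and> W m = S \<inter> V" by blast
  qed
  then obtain V where Vo: "\<And>m. openin X (V m)" and WV: "\<And>m. W m = S \<inter> V m" by metis
  have pV: "p \<in> V m" for m using WB[of m] WV[of m] unfolding B'_def by auto
  have Vbase: "\<exists>m. S \<inter> V m \<subseteq> U" if "openin X U" "p \<in> U" for U
  proof -
    have "openin (subtopology X S) (S \<inter> U)"
      using that(1) by (auto simp: openin_subtopology)
    moreover have "p \<in> S \<inter> U" using that(2) by (simp add: S_def)
    ultimately obtain V' where "V' \<in> B" "p \<in> V'" "V' \<subseteq> S \<inter> U" using Bb by blast
    then obtain m where "W m = V'" using Wsurj unfolding B'_def by blast
    then show ?thesis using WV \<open>V' \<subseteq> S \<inter> U\<close> by blast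
  qed
  define D where "D n = topspace X \<inter> \<Inter>(V ` {m. m \<le> n \<and> y n \<in> V m})" for n
  have Do: "openin X (D n)" for n
    unfolding D_def by (rule openin_Int_Inter) (auto intro: Vo)
  have yD: "y n \<in> D n" for n using ytop unfolding D_def by auto
  have "\<forall>n. \<exists>k. z n k \<in> D n"
  proof
    fix n
    have "eventually (\<lambda>k. z n k \<in> D n) sequentially"
      using zl[of n] Do[of n] yD[of n] unfolding limitin_def by blast
    then show "\<exists>k. z n k \<in> D n" unfolding eventually_sequentially by blast
  qed
  then obtain k where kD: "\<And>n. z n (k n) \<in> D n" by metis
  define x where "x n = z n (k n)" for n
  have xphi: "x n \<in> \<phi> (enat n)" for n using zr unfolding x_def by blast
  have xS: "x n \<in> S" for n unfolding S_def x_def by blast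
  have xlim: "\<exists>N. \<forall>n\<ge>N. x n \<in> U" if U: "openin X U" "p \<in> U" for U
  proof -
    obtain m where m: "S \<inter> V m \<subseteq> U" using Vbase U by blast
    have "eventually (\<lambda>n. y n \<in> V m) sequentially"
      using ylim Vo[of m] pV[of m] unfolding limitin_def by blast
    then obtain N where N: "\<forall>n\<ge>N. y n \<in> V m" unfolding eventually_sequentially by blast
    have "\<forall>n\<ge>max N m. x n \<in> U"
    proof (intro allI impI)
      fix n assume "max N m \<le> n"
      then have "y n \<in> V m" "m \<le> n" using N by auto
      then have "x n \<in> V m" using kD[of n] unfolding D_def x_def by blast
      then show "x n \<in> U" using xS m by blast
    qed
    then show ?thesis by blast
  qed
  define f where "f e = (case e of enat n \<Rightarrow> x n | \<infinity> \<Rightarrow> p)" for e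
  have "continuous_map omega_plus_one X f"
    unfolding continuous_map_def
  proof (intro conjI Pi_I allI impI)
    fix e :: enat
    show "f e \<in> topspace X" using pX xphi phisub by (cases e) (auto simp: f_def)
  next
    fix U assume U: "openin X U"
    show "openin omega_plus_one {e \<in> topspace omega_plus_one. f e \<in> U}"
      unfolding openin_omega
    proof
      assume "\<infinity> \<in> {e \<in> topspace omega_plus_one. f e \<in> U}"
      then have "p \<in> U" by (simp add: f_def)
      then obtain N where "\<forall>n\<ge>N. x n \<in> U" using xlim[OF U] by blast
      then show "\<exists>N. \<forall>n\<ge>N. enat n \<in> {e \<in> topspace omega_plus_one. f e \<in> U}"
        by (auto simp: f_def)
    qed
  qed
  moreover have "is_selection omega_plus_one \<phi> f"
    unfolding is_selection_def
  proof
    fix e :: enat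
    show "f e \<in> \<phi> e" using p xphi by (cases e) (auto simp: f_def)
  qed
  ultimately show "\<exists>f. continuous_map omega_plus_one X f \<and> is_selection omega_plus_one \<phi> f"
    by blast
qed

end
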